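(* For each $k\in\mathbb N$, there is a bilabelled graph in $\mathcal P_k$ whose underlying graph is the $k\times k$ grid.
   Context: A $(k,k)$-bilabelled graph is $\boldsymbol F=(F,\boldsymbol u,\boldsymbol v)$, $\boldsymbol u,\boldsymbol v\in V(F)^k$, with underlying graph $F$. Series composition $\boldsymbol F\cdot\boldsymbol F'$: disjoint union with $v_i$ identified with $u'_i$, multiple edges removed, labels $(\boldsymbol u,\boldsymbol v')$. Parallel composition $\boldsymbol F\odot\boldsymbol F'$: identify $u_i$ with $u'_i$, $v_i$ with $v'_i$, multiple edges removed. For $\sigma\in\mathfrak S_{2k}$, $\boldsymbol F^\sigma$ has in-labels $(w_{\sigma(1)},\dots,w_{\sigma(k)})$, out-labels $(w_{\sigma(k+1)},\dots,w_{\sigma(2k)})$, $\boldsymbol w=\boldsymbol u\boldsymbol v$. $\mathscr C_k$ = cyclic group of rotations of $(1,\dots,k,2k,\dots,k+1)$. Bilabelled minors: via edge contraction, edge deletion, deletion of unlabelled vertices. $\boldsymbol C_k$: vertices $[2k]$, in-labels $(1,\dots,k)$, out-labels $(k+1,\dots,2k)$, edges $\{i,i+1\}$ ($i\in[2k]\setminus\{k,2k\}$), $\{1,k+1\},\{k,2k\}$; $\boldsymbol M_k$: same vertices/labels, edges $\{i,i+k\}$. $\mathcal Q_k^P,\mathcal Q_k^S$ = bilabelled minors of $\boldsymbol C_k,\boldsymbol M_k$; $\mathcal Q_k$ their union. $\mathcal P_k$ = smallest class containing $\mathcal Q_k$, closed under series composition, $\boldsymbol F\mapsto\boldsymbol F\odot\boldsymbol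 Q$ ($\boldsymbol Q\in\mathcal Q_k^P$), and $\boldsymbol F\mapsto\boldsymbol F^\sigma$ ($\sigma\in\mathscr C_k$). *)

theory Defs
  imports Main
begin

text \<open>Bilabelled graphs: vertex set, edge set (edges are vertex sets of size 1 or 2;
size 1 = loop, which may arise from identifications), in-labels, out-labels.
Labels need not be distinct. Positions are 0-indexed.\<close>

datatype 'a blg = BLG (bverts: "'a set") (bedges: "'a set set") (bin: "'a list") (bout: "'a list")

definition blg_iso :: "'a blg \<Rightarrow> 'b blg \<Rightarrow> bool" where
  "blg_iso F G \<longleftrightarrow> (\<exists>f. bij_betw f (bverts F) (bverts G)
      \<and> bedges G = (image f) ` bedges F
      \<and> bin G = map f (bin F) \<and> bout G = map f (bout F))"

text \<open>Gluing of two bilabelled graphs along the equivalence relation generated by the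
pairs P on the disjoint union; the identification map h realises the quotient.
Multiple edges disappear automatically since edges form a set.\<close>
definition glue :: "'a blg \<Rightarrow> 'a blg \<Rightarrow> (('a + 'a) \<times> ('a + 'a)) set
     \<Rightarrow> 'a blg \<Rightarrow> (('a + 'a) \<Rightarrow> 'a) \<Rightarrow> bool" where
  "glue F F' P H h \<longleftrightarrow>
     bverts H = h ` (bverts F <+> bverts F')
   \<and> (\<forall>x\<in>bverts F <+> bverts F'. \<forall>y\<in>bverts F <+> bverts F'.
          h x = h y \<longleftrightarrow> (x, y) \<in> (P \<union> P\<inverse>)\<^sup>*)
   \<and> bedges H = (image h) ` ((image Inl) ` bedges F \<union> (image Inr) ` bedges F')"

definition series :: "'a blg \<Rightarrow> 'a blg \<Rightarrow> 'a blg \<Rightarrow> bool" where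
  "series F F' H \<longleftrightarrow> (\<exists>h. glue F F' (set (zip (map Inl (bout F)) (map Inr (bin F')))) H h
      \<and> bin H = map (h \<circ> Inl) (bin F) \<and> bout H = map (h \<circ> Inr) (bout F'))"

definition parallel :: "'a blg \<Rightarrow> 'a blg \<Rightarrow> 'a blg \<Rightarrow> bool" where
  "parallel F F' H \<longleftrightarrow> (\<exists>h. glue F F'
        (set (zip (map Inl (bin F)) (map Inr (bin F'))) \<union> set (zip (map Inl (bout F)) (map Inr (bout F')))) H h
      \<and> bin H = map (h \<circ> Inl) (bin F) \<and> bout H = map (h \<circ> Inl) (bout F))"

text \<open>F^\<sigma> for a permutation \<sigma> of {0..<2k} (0-indexed positions of w = uv).\<close>
definition permute :: "nat \<Rightarrow> (nat \<Rightarrow> nat) \<Rightarrow> 'a blg \<Rightarrow> 'a blg" where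
  "permute k \<sigma> F = (let w = bin F @ bout F in
     BLG (bverts F) (bedges F) (map (\<lambda>i. w ! \<sigma> i) [0..<k]) (map (\<lambda>i. w ! \<sigma> (k + i)) [0..<k]))"

text \<open>The cyclic order (1,...,k,2k,...,k+1), 0-indexed: position j holds cyc_at k j,
and cyc_pos k is its inverse.  rot k r is the rotation by r steps; the group
\<C>_k consists of rot k r for r < 2k.\<close>
definition cyc_at :: "nat \<Rightarrow> nat \<Rightarrow> nat" where
  "cyc_at k j = (if j < k then j else 3 * k - 1 - j)"
definition cyc_pos :: "nat \<Rightarrow> nat \<Rightarrow> nat" where
  "cyc_pos k i = (if i < k then i else 3 * k - 1 - i)"
definition rot :: "nat \<Rightarrow> nat \<Rightarrow> nat \<Rightarrow> nat" where
  "rot k r i = cyc_at k ((cyc_pos k i + r) mod (2 * k))"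

definition contract_edge :: "'a blg \<Rightarrow> 'a \<Rightarrow> 'a \<Rightarrow> 'a blg" where
  "contract_edge F a b = (let f = (\<lambda>x. if x = b then a else x) in
     BLG (bverts F - {b}) ((image f) ` (bedges F - {{a, b}})) (map f (bin F)) (map f (bout F)))"

inductive minor_step :: "'a blg \<Rightarrow> 'a blg \<Rightarrow> bool" where
  contr: "{a, b} \<in> bedges F \<Longrightarrow> a \<noteq> b \<Longrightarrow> minor_step F (contract_edge F a b)"
| del_edge: "e \<in> bedges F \<Longrightarrow> minor_step F (BLG (bverts F) (bedges F - {e}) (bin F) (bout F))"
| del_vert: "x \<in> bverts F \<Longrightarrow> x \<notin> set (bin F) \<Longrightarrow> x \<notin> set (bout F) \<Longrightarrow>
     minor_step F (BLG (bverts F - {x}) {e \<in> bedges F. x \<notin> e} (bin F) (bout F))"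

definition bl_minor :: "'a blg \<Rightarrow> 'b blg \<Rightarrow> bool" where
  "bl_minor G H \<longleftrightarrow> (\<exists>G'. minor_step\<^sup>*\<^sup>* G G' \<and> blg_iso G' H)"

definition Cgraph :: "nat \<Rightarrow> nat blg" where
  "Cgraph k = BLG {0..<2*k}
     ({{i, i+1} | i. i + 1 < 2*k \<and> i \<noteq> k - 1} \<union> (if k = 0 then {} else {{0, k}, {k - 1, 2*k - 1}}))
     [0..<k] [k..<2*k]"

definition Mgraph :: "nat \<Rightarrow> nat blg" where
  "Mgraph k = BLG {0..<2*k} {{i, i+k} | i. i < k} [0..<k] [k..<2*k]"

definition inQP :: "nat \<Rightarrow> nat blg \<Rightarrow> bool" where
  "inQP k F \<longleftrightarrow> bl_minor (Cgraph k) F"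
definition inQS :: "nat \<Rightarrow> nat blg \<Rightarrow> bool" where
  "inQS k F \<longleftrightarrow> bl_minor (Mgraph k) F"

inductive inP :: "nat \<Rightarrow> nat blg \<Rightarrow> bool" for k where
  base: "inQP k F \<or> inQS k F \<Longrightarrow> inP k F"
| ser: "inP k F \<Longrightarrow> inP k F' \<Longrightarrow> series F F' H \<Longrightarrow> inP k H"
| par: "inP k F \<Longrightarrow> inQP k Q \<Longrightarrow> parallel F Q H \<Longrightarrow> inP k H"
| perm: "inP k F \<Longrightarrow> r < 2 * k \<Longrightarrow> inP k (permute k (rot k r) F)"

definition grid_verts :: "nat \<Rightarrow> (nat \<times> nat) set" where
  "grid_verts k = {0..<k} \<times> {0..<k}"
definition grid_edges :: "nat \<Rightarrow> (nat \<times> nat) set set" where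
  "grid_edges k = {{(a, b), (c, d)} | a b c d. (a, b) \<in> grid_verts k \<and> (c, d) \<in> grid_verts k
      \<and> ((a = c \<and> b + 1 = d) \<or> (b = d \<and> a + 1 = c))}"

end

theory Submission
  imports Defs
begin

lemma rtrancl_match:
  assumes P1: "\<And>x y. (x,y) \<in> P \<Longrightarrow> \<exists>a b. x = Inl a \<and> y = Inr b"
    and P2: "\<And>x y y'. (x,y)\<in>P \<Longrightarrow> (x,y')\<in>P \<Longrightarrow> y=y'"
    and P3: "\<And>x x' y. (x,y)\<in>P \<Longrightarrow> (x',y)\<in>P \<Longrightarrow> x=x'"
  shows "(x, y) \<in> (P \<union> P\<inverse>)\<^sup>* \<longleftrightarrow> (x = y \<or> (x,y)\<in>P \<or> (y,x)\<in>P)"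
proof
  assume "(x, y) \<in> (P \<union> P\<inverse>)\<^sup>*"
  then show "x = y \<or> (x,y)\<in>P \<or> (y,x)\<in>P"
  proof (induction rule: rtrancl_induct)
    case base then show ?case by simp
  next
    case (step y z)
    from step.hyps(2) have "(y,z) \<in> P \<or> (z,y) \<in> P" by auto
    then show ?case
    proof
      assume yz: "(y,z) \<in> P"
      from step.IH show ?thesis
      proof (elim disjE)
        assume "x = y" then show ?thesis using yz by simp
      next
        assume xy: "(x,y) \<in> P"
        obtain a b where "x = Inl a" "y = Inr b" using P1[OF xy] by blast
        moreover obtain a' b' where "y = Inl a'" "z = Inr b'" using P1[OF yz] by blast
        ultimately show ?thesis by simp
      next
        assume "(y,x) \<in> P" then show ?thesis using yz P2 by blast
      qed
    next
      assume zy: "(z,y) \<in> P"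
      from step.IH show ?thesis
      proof (elim disjE)
        assume "x = y" then show ?thesis using zy by simp
      next
        assume "(x,y) \<in> P" then show ?thesis using zy P3 by blast
      next
        assume yx: "(y,x) \<in> P"
        obtain a b where "y = Inl a" "x = Inr b" using P1[OF yx] by blast
        moreover obtain a' b' where "z = Inl a'" "y = Inr b'" using P1[OF zy] by blast
        ultimately show ?thesis by simp
      qed
    qed
  qed
next
  assume "x = y \<or> (x,y)\<in>P \<or> (y,x)\<in>P"
  then show "(x, y) \<in> (P \<union> P\<inverse>)\<^sup>*" by blast
qed

lemma glue_I:
  assumes "bverts H = h ` (bverts F <+> bverts F')"
    and P1: "\<And>x y. (x,y) \<in> P \<Longrightarrow> \<exists>a b. x = Inl a \<and> y = Inr b"
    and P2: "\<And>x y y'. (x,y)\<in>P \<Longrightarrow> (x,y')\<in>P \<Longrightarrow> y=y'"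
    and P3: "\<And>x x' y. (x,y)\<in>P \<Longrightarrow> (x',y)\<in>P \<Longrightarrow> x=x'"
    and hh: "\<And>x y. x \<in> bverts F <+> bverts F' \<Longrightarrow> y \<in> bverts F <+> bverts F' \<Longrightarrow>
          h x = h y \<longleftrightarrow> (x = y \<or> (x,y)\<in>P \<or> (y,x)\<in>P)"
    and "bedges H = image (h \<circ> Inl) ` bedges F \<union> image (h \<circ> Inr) ` bedges F'"
  shows "glue F F' P H h"
proof -
  have e: "(image h) ` ((image Inl) ` bedges F \<union> (image Inr) ` bedges F')
      = image (h \<circ> Inl) ` bedges F \<union> image (h \<circ> Inr) ` bedges F'"
    by (simp add: image_Un image_image image_comp)
  show ?thesis unfolding glue_def
    using assms(1,6) e hh rtrancl_match[OF P1 P2 P3] by simp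
qed

lemma zip_mem:
  assumes "b - a = d - c"
  shows "(x,y) \<in> set (zip (map Inl [a..<b]) (map Inr [c..<d])) \<longleftrightarrow>
     (\<exists>i<b-a. x = Inl (a+i) \<and> y = Inr (c+i))"
  using assms by (auto simp: set_zip) (metis nth_map_upt add.commute length_upt nth_map) 

lemma path_cond:
  fixes i k :: nat
  assumes "k \<ge> 1" "i + 1 < 2*k"
  shows "(i+1) mod k \<noteq> 0 \<longleftrightarrow> i \<noteq> k - 1"
proof (cases "i + 1 < k")
  case True then show ?thesis by auto
next
  case False
  then have "(i+1) mod k = (i + 1 - k) mod k" by (simp add: le_mod_geq)
  also have "\<dots> = i + 1 - k" using assms by (intro mod_less) linarith
  finally have "(i+1) mod k = i + 1 - k" .
  then show ?thesis using assms False by auto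
qed


definition VE :: "nat \<Rightarrow> nat \<Rightarrow> nat set set" where
  "VE k N = {{n, n+k} | n. n < N}"
definition PE :: "nat \<Rightarrow> nat \<Rightarrow> nat set set" where
  "PE k N = {{n, n+1} | n. n + 1 < N \<and> (n+1) mod k \<noteq> 0}"
definition Tm :: "nat \<Rightarrow> nat \<Rightarrow> nat blg" where
  "Tm k m = BLG {0..<(m+1)*k} (VE k (m*k) \<union> PE k ((m+1)*k)) [0..<k] [m*k..<(m+1)*k]"
definition Qb :: "nat \<Rightarrow> nat blg" where
  "Qb k = BLG {0..<2*k} (PE k (2*k)) [0..<k] [k..<2*k]"

lemma iso_refl: "blg_iso F F"
  unfolding blg_iso_def by (rule exI[of _ id]) simp

lemma M_in: "inP k (Mgraph k)"
  by (rule inP.base) (auto simp: inQS_def bl_minor_def iso_refl)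

lemma Qb_in:
  assumes k: "k \<ge> 2"
  shows "inQP k (Qb k)"
proof -
  let ?E = "{{i, i+1} | i. i + 1 < 2*k \<and> i \<noteq> k - 1}"
  have CE: "bedges (Cgraph k) = ?E \<union> {{0, k}, {k - 1, 2*k - 1}}"
    using k by (simp add: Cgraph_def)
  define G1 where "G1 = BLG (bverts (Cgraph k)) (bedges (Cgraph k) - {{0,k}}) (bin (Cgraph k)) (bout (Cgraph k))"
  define G2 where "G2 = BLG (bverts G1) (bedges G1 - {{k - 1, 2*k - 1}}) (bin G1) (bout G1)"
  have s1: "minor_step (Cgraph k) G1" unfolding G1_def
    by (rule minor_step.del_edge) (simp add: CE)
  have ne: "{k - 1, 2*k - 1} \<noteq> {0, k}" using k by (auto simp: doubleton_eq_iff)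
  have s2: "minor_step G1 G2" unfolding G2_def
    by (rule minor_step.del_edge) (use ne in \<open>simp add: G1_def CE\<close>)
  have n1: "{0,k} \<notin> ?E" using k by (auto simp: doubleton_eq_iff)
  have n2: "{k - 1, 2*k - 1} \<notin> ?E" using k by (auto simp: doubleton_eq_iff)
  have "bedges G2 = ?E" unfolding G2_def G1_def using n1 n2 ne by (auto simp: CE)
  also have "?E = PE k (2*k)" unfolding PE_def using path_cond k
    by (metis (no_types, lifting) Suc_1 Suc_le_lessD less_imp_le_nat one_le_numeral)
  finally have "G2 = Qb k" unfolding G2_def G1_def Qb_def by (simp add: Cgraph_def)
  then show ?thesis unfolding inQP_def bl_minor_def using s1 s2 iso_refl
    by (metis rtranclp.rtrancl_into_rtrancl rtranclp.rtrancl_refl)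
qed


lemma D_par:
  assumes k: "k \<ge> 2"
  shows "parallel (Mgraph k) (Qb k) (Tm k 1)"
proof -
  define h :: "nat + nat \<Rightarrow> nat" where "h = case_sum id id"
  define P :: "((nat + nat) \<times> (nat + nat)) set" where "P = set (zip (map Inl (bin (Mgraph k))) (map Inr (bin (Qb k))))
       \<union> set (zip (map Inl (bout (Mgraph k))) (map Inr (bout (Qb k))))"
  have Pm: "(x,y) \<in> P \<longleftrightarrow> (\<exists>i<2*k. x = Inl i \<and> y = Inr i)" for x y
  proof -
    have "(x,y) \<in> P \<longleftrightarrow> (\<exists>i<k. x = Inl (0+i) \<and> y = Inr (0+i)) \<or> (\<exists>i<2*k-k. x = Inl (k+i) \<and> y = Inr (k+i))"
      unfolding P_def Mgraph_def Qb_def using zip_mem[of "k" 0 k 0 x y] zip_mem[of "2*k" k "2*k" k x y]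
      by simp
    also have "\<dots> \<longleftrightarrow> (\<exists>i<2*k. x = Inl i \<and> y = Inr i)"
      by (auto, metis add_diff_inverse_nat add_less_cancel_left mult_2 not_less)
    finally show ?thesis .
  qed
  have g: "glue (Mgraph k) (Qb k) P (Tm k 1) h"
  proof (rule glue_I)
    show "bverts (Tm k 1) = h ` (bverts (Mgraph k) <+> bverts (Qb k))"
      by (auto simp: Tm_def Mgraph_def Qb_def h_def Plus_def image_Un image_image)
    show "\<exists>a b. x = Inl a \<and> y = Inr b" if "(x,y) \<in> P" for x y using that Pm by auto
    show "y = y'" if "(x,y) \<in> P" "(x,y') \<in> P" for x y y' using that Pm by auto
    show "x = x'" if "(x,y) \<in> P" "(x',y) \<in> P" for x x' y using that Pm by auto
    show "h x = h y \<longleftrightarrow> (x = y \<or> (x,y)\<in>P \<or> (y,x)\<in>P)"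
      if "x \<in> bverts (Mgraph k) <+> bverts (Qb k)" "y \<in> bverts (Mgraph k) <+> bverts (Qb k)" for x y
      using that by (auto simp: Pm h_def Mgraph_def Qb_def)
    show "bedges (Tm k 1) = image (h \<circ> Inl) ` bedges (Mgraph k) \<union> image (h \<circ> Inr) ` bedges (Qb k)"
      by (simp add: Tm_def Mgraph_def Qb_def h_def VE_def mult_2)
  qed
  show ?thesis unfolding parallel_def
    by (rule exI[of _ h]) (use g in \<open>simp add: P_def h_def Tm_def Mgraph_def comp_def mult_2 map_idI\<close>)
qed


lemma VE_split: "VE k (N + k) = VE k N \<union> image (\<lambda>y. N + y) ` VE k k"
proof
  show "VE k (N + k) \<subseteq> VE k N \<union> image (\<lambda>y. N + y) ` VE k k"
  proof
    fix e assume "e \<in> VE k (N + k)"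
    then obtain n where e: "e = {n, n+k}" "n < N + k" by (auto simp: VE_def)
    show "e \<in> VE k N \<union> image (\<lambda>y. N + y) ` VE k k"
    proof (cases "n < N")
      case True then show ?thesis using e by (auto simp: VE_def)
    next
      case False
      then have "e = image (\<lambda>y. N + y) {n - N, n - N + k}" "n - N < k" using e by auto
      then show ?thesis unfolding VE_def by blast
    qed
  qed
next
  show "VE k N \<union> image (\<lambda>y. N + y) ` VE k k \<subseteq> VE k (N + k)"
  proof
    fix e assume "e \<in> VE k N \<union> image (\<lambda>y. N + y) ` VE k k"
    then show "e \<in> VE k (N + k)"
    proof
      assume "e \<in> VE k N" then show ?thesis by (auto simp: VE_def)
    next
      assume "e \<in> image (\<lambda>y. N + y) ` VE k k"
      then obtain i where i: "e = {N + i, N + (i + k)}" "i < k" by (auto simp: VE_def)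
      then show ?thesis unfolding VE_def
        by (intro CollectI exI[of _ "N+i"]) (auto simp: add.assoc)
    qed
  qed
qed

lemma PE_split:
  assumes "k dvd N" and k1: "k \<ge> 1"
  shows "PE k (N + 2*k) = PE k (N + k) \<union> image (\<lambda>y. N + y) ` PE k (2*k)"
proof -
  have md: "(N + i) mod k = i mod k" for i using assms by (metis mod_add_left_eq dvd_imp_mod_0 add_0)
  show ?thesis
  proof
    show "PE k (N + 2*k) \<subseteq> PE k (N + k) \<union> image (\<lambda>y. N + y) ` PE k (2*k)"
    proof
      fix e assume "e \<in> PE k (N + 2*k)"
      then obtain n where e: "e = {n, n+1}" "n + 1 < N + 2*k" "(n+1) mod k \<noteq> 0" by (auto simp: PE_def)
      show "e \<in> PE k (N + k) \<union> image (\<lambda>y. N + y) ` PE k (2*k)"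
      proof (cases "n + 1 < N + k")
        case True then show ?thesis using e by (auto simp: PE_def)
      next
        case False
        then have ge: "n \<ge> N" using k1 by simp
        then have "e = image (\<lambda>y. N + y) {n - N, n - N + 1}" "n - N + 1 < 2*k" using e by auto
        moreover have "(n - N + 1) mod k \<noteq> 0" using e(3) md[of "n - N + 1"] ge by simp
        ultimately show ?thesis unfolding PE_def by blast
      qed
    qed
  next
    show "PE k (N + k) \<union> image (\<lambda>y. N + y) ` PE k (2*k) \<subseteq> PE k (N + 2*k)"
    proof
      fix e assume "e \<in> PE k (N + k) \<union> image (\<lambda>y. N + y) ` PE k (2*k)"
      then show "e \<in> PE k (N + 2*k)"
      proof
        assume "e \<in> PE k (N + k)" then show ?thesis by (auto simp: PE_def)
      next
        assume "e \<in> image (\<lambda>y. N + y) ` PE k (2*k)"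
        then obtain i where i: "e = {N + i, N + i + 1}" "i + 1 < 2*k" "(i+1) mod k \<noteq> 0" by (auto simp: PE_def)
        then have "(N + i + 1) mod k \<noteq> 0" using md[of "i+1"] by (simp add: add.assoc)
        then show ?thesis unfolding PE_def using i by auto
      qed
    qed
  qed
qed


lemma T_ser:
  assumes k: "k \<ge> 1"
  shows "series (Tm k m) (Tm k 1) (Tm k (Suc m))"
proof -
  define h :: "nat + nat \<Rightarrow> nat" where "h = case_sum id (\<lambda>y. m*k + y)"
  define P :: "((nat + nat) \<times> (nat + nat)) set"
    where "P = set (zip (map Inl (bout (Tm k m))) (map Inr (bin (Tm k 1))))"
  have Pm: "(x,y) \<in> P \<longleftrightarrow> (\<exists>i<k. x = Inl (m*k+i) \<and> y = Inr i)" for x y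
    unfolding P_def Tm_def using zip_mem[of "(m+1)*k" "m*k" k 0 x y] by simp
  have g: "glue (Tm k m) (Tm k 1) P (Tm k (Suc m)) h"
  proof (rule glue_I)
    have "{0..<(Suc m + 1)*k} = {0..<(m+1)*k} \<union> (\<lambda>y. m*k + y) ` {0..<2*k}"
    proof -
      have "x \<in> (\<lambda>y. m*k + y) ` {0..<2*k}" if "x < (Suc m + 1)*k" "\<not> x < (m+1)*k" for x
        using that by (intro image_eqI[of _ _ "x - m*k"]) auto
      then show ?thesis by auto
    qed
    then show "bverts (Tm k (Suc m)) = h ` (bverts (Tm k m) <+> bverts (Tm k 1))"
      by (simp add: Tm_def h_def Plus_def image_Un image_image mult_2)
    show "\<exists>a b. x = Inl a \<and> y = Inr b" if "(x,y) \<in> P" for x y using that Pm by auto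
    show "y = y'" if "(x,y) \<in> P" "(x,y') \<in> P" for x y y' using that Pm by auto
    show "x = x'" if "(x,y) \<in> P" "(x',y) \<in> P" for x x' y using that Pm by auto
    show "h x = h y \<longleftrightarrow> (x = y \<or> (x,y)\<in>P \<or> (y,x)\<in>P)"
      if "x \<in> bverts (Tm k m) <+> bverts (Tm k 1)" "y \<in> bverts (Tm k m) <+> bverts (Tm k 1)" for x y
    proof -
      have A: "a < (m+1)*k \<Longrightarrow> b < 2*k \<Longrightarrow> a = m*k + b \<longleftrightarrow> (\<exists>i<k. a = m*k+i \<and> b = i)" for a b
        by auto
      show ?thesis using that A by (auto simp: Pm h_def Tm_def)
    qed
    have "bedges (Tm k (Suc m)) = VE k (m*k + k) \<union> PE k (m*k + 2*k)"
    proof -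
      have "(Suc m + 1)*k = m*k + 2*k" "Suc m * k = m*k + k" by (simp_all add: algebra_simps)
      then show ?thesis by (simp only: Tm_def blg.sel)
    qed
    also have "\<dots> = (VE k (m*k) \<union> PE k (m*k + k)) \<union> image (\<lambda>y. m*k + y) ` (VE k k \<union> PE k (2*k))"
      using VE_split[of k "m*k"] PE_split[of k "m*k", OF _ k] by (auto simp: image_Un)
    also have "\<dots> = image (h \<circ> Inl) ` bedges (Tm k m) \<union> image (h \<circ> Inr) ` bedges (Tm k 1)"
      by (simp add: Tm_def h_def algebra_simps comp_def mult_2_right)
    finally show "bedges (Tm k (Suc m)) = image (h \<circ> Inl) ` bedges (Tm k m) \<union> image (h \<circ> Inr) ` bedges (Tm k 1)" .
  qed
  have o: "map (\<lambda>y. m*k + y) [k..<2*k] = [(m+1)*k..<(Suc m + 1)*k]"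
    by (rule nth_equalityI) (auto simp: algebra_simps)
  show ?thesis unfolding series_def
    by (rule exI[of _ h]) (use g o in \<open>simp add: P_def h_def Tm_def comp_def mult_2\<close>)
qed


lemma T_in:
  assumes k: "k \<ge> 2" and m: "m \<ge> 1"
  shows "inP k (Tm k m)"
  using m
proof (induction m rule: dec_induct)
  case base
  show ?case by (rule inP.par[OF M_in Qb_in[OF k] D_par[OF k]])
next
  case (step m)
  show ?case
    by (rule inP.ser[OF step.IH _ T_ser]) (use k inP.par[OF M_in Qb_in[OF k] D_par[OF k]] in auto)
qed

lemma dm:
  fixes a b k :: nat
  assumes "b < k"
  shows "(a*k+b) div k = a" "(a*k+b) mod k = b"
  using assms by auto

lemma grid_bij:
  assumes k: "k \<ge> 1"
  shows "bij_betw (\<lambda>n. (n div k, n mod k)) {0..<k*k} (grid_verts k)"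
proof (rule bij_betwI')
  show "((x div k, x mod k) = (y div k, y mod k)) = (x = y)" for x y
    by (metis div_mult_mod_eq prod.inject)
  show "(x div k, x mod k) \<in> grid_verts k" if "x \<in> {0..<k*k}" for x
    using that k by (auto simp: grid_verts_def less_mult_imp_div_less)
  show "\<exists>x\<in>{0..<k*k}. y = (x div k, x mod k)" if yin: "y \<in> grid_verts k" for y
  proof -
    obtain a b where y: "y = (a,b)" "a < k" "b < k" using yin by (cases y) (auto simp: grid_verts_def)
    have "a*k + b < k*k"
    proof -
      have "a*k + b < a*k + k" using y by simp
      also have "\<dots> = (a+1)*k" by simp
      also have "\<dots> \<le> k*k" using y by (intro mult_right_mono) auto
      finally show ?thesis .
    qed
    then show ?thesis using y dm[of b k a] by (intro bexI[of _ "a*k+b"]) auto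
  qed
qed

lemma grid_edgeI:
  "(a,b) \<in> grid_verts k \<Longrightarrow> (c,d) \<in> grid_verts k \<Longrightarrow> (a = c \<and> b+1 = d) \<or> (b = d \<and> a+1 = c)
   \<Longrightarrow> {(a,b),(c,d)} \<in> grid_edges k"
  unfolding grid_edges_def by blast

lemma grid_edges_eq:
  assumes k: "k \<ge> 1"
  shows "image (\<lambda>n. (n div k, n mod k)) ` (VE k ((k-1)*k) \<union> PE k (k*k)) = grid_edges k"
proof -
  let ?f = "\<lambda>n::nat. (n div k, n mod k)"
  have bnd: "a*k + b < k*k" if "a < k" "b < k" for a b
  proof -
    have "a*k + b < a*k + k" using that by simp
    also have "\<dots> = (a+1)*k" by simp
    also have "\<dots> \<le> k*k" using that by (intro mult_right_mono) auto
    finally show ?thesis .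
  qed
  show ?thesis
  proof
    show "image ?f ` (VE k ((k-1)*k) \<union> PE k (k*k)) \<subseteq> grid_edges k"
    proof
      fix e assume "e \<in> image ?f ` (VE k ((k-1)*k) \<union> PE k (k*k))"
      then obtain e' where e': "e = image ?f e'" "e' \<in> VE k ((k-1)*k) \<union> PE k (k*k)" by blast
      from e'(2) show "e \<in> grid_edges k"
      proof
        assume "e' \<in> VE k ((k-1)*k)"
        then obtain n where n: "e' = {n, n+k}" "n < (k-1)*k" by (auto simp: VE_def)
        have "n div k < k - 1" using n k by (simp add: less_mult_imp_div_less)
        moreover have "(n+k) div k = n div k + 1" "(n+k) mod k = n mod k" using k by (simp_all add: div_add_self2)
        moreover have "n mod k < k" using k by simp
        ultimately have "{(n div k, n mod k), ((n+k) div k, (n+k) mod k)} \<in> grid_edges k"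
          by (intro grid_edgeI) (auto simp: grid_verts_def)
        then show ?thesis using e'(1) n(1) by simp
      next
        assume "e' \<in> PE k (k*k)"
        then obtain n where n: "e' = {n, n+1}" "n + 1 < k*k" "(n+1) mod k \<noteq> 0" by (auto simp: PE_def)
        have "(n+1) div k = n div k" "(n+1) mod k = n mod k + 1"
          using n(3) by (simp_all add: div_Suc mod_Suc split: if_splits)
        moreover have "n mod k + 1 < k"
        proof -
          have "(n+1) mod k < k" using k by simp
          then show ?thesis using calculation(2) by linarith
        qed
        moreover have "n div k < k" using n k by (simp add: less_mult_imp_div_less)
        ultimately have "{(n div k, n mod k), ((n+1) div k, (n+1) mod k)} \<in> grid_edges k"
          by (intro grid_edgeI) (auto simp: grid_verts_def)
        then show ?thesis using e'(1) n(1) by simp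
      qed
    qed
  next
    show "grid_edges k \<subseteq> image ?f ` (VE k ((k-1)*k) \<union> PE k (k*k))"
    proof
      fix e assume "e \<in> grid_edges k"
      then obtain a b c d where e: "e = {(a,b),(c,d)}" "a < k" "b < k" "c < k" "d < k"
          "(a = c \<and> b + 1 = d) \<or> (b = d \<and> a + 1 = c)"
        by (auto simp: grid_edges_def grid_verts_def)
      from e(6) show "e \<in> image ?f ` (VE k ((k-1)*k) \<union> PE k (k*k))"
      proof
        assume h: "a = c \<and> b + 1 = d"
        then have cd: "c = a" "d = b + 1" by auto
        have q: "(a*k+b+1) div k = a" "(a*k+b+1) mod k = b+1"
          using dm[of "b+1" k a] e cd by (simp_all add: add.assoc)
        have "a*k + (b+1) < k*k" using bnd[of a "b+1"] e h by simp
        moreover have "(a*k+b+1) mod k \<noteq> 0" using dm[of "b+1" k a] e h by simp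
        moreover have "e = image ?f {a*k+b, a*k+b+1}"
          using e(1) cd q dm[of b k a] e(3) by simp
        ultimately have "{a*k+b, a*k+b+1} \<in> PE k (k*k)" "e = image ?f {a*k+b, a*k+b+1}"
          unfolding PE_def by (auto simp: add.assoc)
        then show ?thesis by blast
      next
        assume h: "b = d \<and> a + 1 = c"
        have a1: "a + 1 < k" using h e by auto
        have "(a+1)*k + b < k*k" using bnd[OF a1 e(3)] .
        then have "a*k + b < (k-1)*k" using k by (simp add: algebra_simps diff_mult_distrib)
        moreover have "e = image ?f {a*k+b, a*k+b+k}"
        proof -
          have cd: "c = a + 1" "d = b" using h by auto
          have "a*k+b+k = (a+1)*k + b" by simp
          then have q: "(a*k+b+k) div k = a+1" "(a*k+b+k) mod k = b" using dm[of b k "a+1"] e(3) by (metis (no_types))+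
          show ?thesis using e(1) cd q dm[of b k a] e(3) by simp
        qed
        ultimately have "{a*k+b, a*k+b+k} \<in> VE k ((k-1)*k)" "e = image ?f {a*k+b, a*k+b+k}"
          unfolding VE_def by auto
        then show ?thesis by blast
      qed
    qed
  qed
qed


theorem lemma4p10:
  fixes k :: nat
  shows "\<exists>F. inP k F \<and> (\<exists>f. bij_betw f (bverts F) (grid_verts k)
                            \<and> (image f) ` bedges F = grid_edges k)"
proof (cases "k \<ge> 2")
  case True
  have kk: "k - 1 + 1 = k" using True by simp
  have inp: "inP k (Tm k (k-1))" using T_in[OF True] True by simp
  have v: "bverts (Tm k (k-1)) = {0..<k*k}" unfolding Tm_def kk by simp
  have e: "bedges (Tm k (k-1)) = VE k ((k-1)*k) \<union> PE k (k*k)" unfolding Tm_def kk by simp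
  have b: "bij_betw (\<lambda>n. (n div k, n mod k)) (bverts (Tm k (k-1))) (grid_verts k)"
    unfolding v using grid_bij[of k] True by simp
  have ee: "(image (\<lambda>n. (n div k, n mod k))) ` bedges (Tm k (k-1)) = grid_edges k"
    unfolding e using grid_edges_eq[of k] True by simp
  show ?thesis using inp b ee by blast
next
  case False
  then have "k = 0 \<or> k = 1" by auto
  then show ?thesis
  proof
    assume k0: "k = 0"
    have inp: "inP k (Cgraph 0)" using k0
      by (intro inP.base) (auto simp: inQP_def bl_minor_def iso_refl)
    have ge: "grid_edges 0 = {}" "grid_verts 0 = {}" by (auto simp: grid_edges_def grid_verts_def)
    have ce: "bedges (Cgraph 0) = {}" "bverts (Cgraph 0) = {}" by (auto simp: Cgraph_def)
    show ?thesis using inp k0 ge ce by (intro exI[of _ "Cgraph 0"] conjI exI[of _ "\<lambda>n::nat. (n, n)"]) (auto simp: bij_betw_def)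
  next
    assume k1: "k = 1"
    define G where "G = contract_edge (Cgraph 1) 0 1"
    have c1: "Cgraph 1 = BLG {0, 1} {{0, 1}} [0] [1]"
      by (auto simp: Cgraph_def upt_rec)
    have G: "G = BLG {0} {} [0] [0]" unfolding G_def c1 contract_edge_def by auto
    have "minor_step (Cgraph 1) G" unfolding G_def
      by (rule minor_step.contr) (unfold c1, auto)
    then have inp: "inP k G" using k1
      by (intro inP.base) (auto simp: inQP_def bl_minor_def iso_refl)
    have ge: "grid_edges 1 = {}" "grid_verts 1 = {(0,0)}" by (auto simp: grid_edges_def grid_verts_def)
    show ?thesis using inp k1 ge G
      by (intro exI[of _ G] conjI exI[of _ "\<lambda>_. (0::nat,0::nat)"]) auto
  qed
qed

end
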